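(* Suppose every agent $a\in\mathcal A$ satisfies assumptions (A1)–(A8) below and (A9), (A10) hold. Fix initial conditions $(x_0^a,\theta_0^a)\in\mathcal X\times\Theta$ and past incentives $\{\pi^a_i\}_{i=0}^T$ for all $a\in\mathcal A$. Then a solution of $\min\{\Phi(x_0^a,\theta_0^a,\{\pi^a_i\}_{i=0}^{T+n}\text{ for }a\in\mathcal A):\{\{\pi^a_t\}_{t=T+1}^{T+n}\text{ for }a\in\mathcal A\}\in\Omega\}$ is given by the algorithm ABMA described below but with its Step 2 replaced by the step: set $(\hat x^a_{0,T},\hat\theta^a_{0,T})=(x_0^a,\theta_0^a)$.
   Context: Single-agent model (each agent $a$ in the finite set $\mathcal A$ follows it with its own quantities indexed by $a$). Let $\mathcal X,\mathcal U,\Pi,\Theta$ be compact finite-dimensional sets with $\mathcal X,\mathcal U,\Theta$ convex. At each discrete time $t$ the agent has system state $x_t\in\mathcal X$, motivational state $\theta_t\in\Theta$; the coordinator applies $\pi_t\in\Pi$. The agent decides $u_t\in\arg\max\{f(x_{t+1},u,\theta_t,\pi_t):x_{t+1}=h(x_t,u),u\in\mathcal U\}$, and $x_{t+1}=h(x_t,u_t)$, $\theta_{t+1}=g(x_t,u_t,\theta_t,\pi_t)$. Observations $\tilde x_{t_i}=Dx_{t_i}+\nu_{t_i}$, $\tilde y_{\tau_i}=Cu_{\tau_i}+\omega_{\tau_i}$; $C,D$ known; $p_\nu,p_\omega$ noise densities; $(a;b)$ is vertical concatenation. Assumptions: (A1) $\mathcal X,\mathcal U,\Pi,\Theta$ bounded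 finite-dimensional; $\mathcal X,\mathcal U,\Theta$ convex polyhedra given by finitely many linear inequalities; $\Pi$ given by finitely many mixed integer linear constraints. (A2) $f$ deterministic, concave in $x$, strictly concave in $u$, concave in $\theta$, $f(x,u,\theta,\pi)=-(x;u)^TQ(x;u)+(\theta;\pi)^TH(x;u)+\sum_{i=1}^K\min_{j\in J_i}\{F_{i,j}(x;u;\theta;\pi)+\zeta_{i,j}\}$, $Q\succeq0$. (A3) $h,g$ deterministic surjective, $h(x,u)=Ax+Bu+k$, $g(x,u,\theta,\pi)=G_i(x;u;\theta;\pi)+\chi_i$ when $B_i(x;u;\theta;\pi)\le\psi_i$ (finitely many $i$, polytopes with disjoint interiors). (A4) Noises i.i.d. with i.i.d. components, zero mean, known finite variance; $\log p_\nu,\log p_\omega$ expressible by integer linear constraints. (A5) Observability: for some $T$ and incentive sequence, $(x_0,\theta_0)$ is exactly computable from noiseless measurements on $0\le t\le T$. (A6) Prior density $p(x_0,\theta_0)>0$ on $\mathcal X\times\Theta$ with $\log p$ expressible by finitely many mixed integer linear constraints. (A7) Sufficient excitation: with $(x_0^*,\theta_0^* )$ the true initial condition and $\mathcal E(\delta)$ the complement in $\mathcal X\times\Theta$ of its open $\delta$-ball, almost surely for all $\delta>0$, $\max_{\mathcal E(\delta)}\lim_{T\to\infty}\big[\sum_i\log\frac{p_\nu(\tilde x_{t_i}-D\bar x_{t_i})}{p_\nu(\tilde x_{t_i}-Dx_{t_i})}+\sum_j\log\frac{p_\omega(\tilde y_{\tau_j}-C\bar u_{\tau_j})}{p_\omega(\tilde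 y_{\tau_j}-Cu_{\tau_j})}\big]=-\infty$. (A8) The agent's bounded loss $\ell^a:\mathcal X^n\times\mathcal U^n\to\mathbb R$ is described by mixed integer linear constraints. Definitions. $\psi^a_T(\bar x_0,\bar\theta_0)$: maximum over trajectories of $\sum_i\log p_\nu(\tilde x_{t_i}-Dx_{t_i})+\sum_j\log p_\omega(\tilde y_{\tau_j}-Cu_{\tau_j})+\log p(x_0,\theta_0)$ subject to decision rule and dynamics (applied incentives), $x_t\in\mathcal X,\theta_t\in\Theta$, $x_0=\bar x_0,\theta_0=\bar\theta_0$. $\varphi^a(\bar x_0,\bar\theta_0,\{\bar\pi_i\}_{i=0}^{T+n})$: minimum of $\ell^a(\{x_t,u_t\}_{t=T+1}^{T+n})$ over trajectories satisfying decision rule and dynamics with $x_0=\bar x_0,\theta_0=\bar\theta_0,\pi_t=\bar\pi_t$. (A9) The joint loss is separable, taken additively: $\Phi(x_0^a,\theta_0^a,\{\pi^a_i\}_{i=0}^{T+n}\text{ for }a\in\mathcal A)=\sum_a\varphi^a(x_0^a,\theta_0^a,\{\pi^a_i\}_{i=0}^{T+n})$ (the multiplicative case reduces to this by logarithms). (A10) There exist a finite set $V$ of vectors, compact sets $S_v\subseteq\Pi^n$ representable by finitely many mixed integer linear constraints, and a vector $\beta$ such that $\Omega=\{\{\pi^a_i\}_{i=T+1}^{T+n}\text{ for }a\in\mathcal A:\exists\,y^a_v\in\{0,1\},\ \sum_vy^a_v=1\ \forall a,\ \sum_a\sum_v v\,y^a_v\le\beta,\ \{\pi^a_i\}_{i=T+1}^{T+n}\in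 S_v\text{ if }y^a_v=1\}$. Algorithm ABMA (at time $T$): for each $a\in\mathcal A$: Step 2: compute $(\hat x^a_{0,T},\hat\theta^a_{0,T})\in\arg\max\psi^a_T$; for each $v\in V$ (Steps 4–5): set $\pi^a_v\in\arg\min\{\varphi^a(\hat x^a_{0,T},\hat\theta^a_{0,T},\{\pi_i\}_{i=0}^{T+n}):\{\pi_i\}_{i=T+1}^{T+n}\in S_v\}$ (with $\pi_0,\dots,\pi_T$ the given past incentives of agent $a$) and $\phi^a_v=\varphi^a(\hat x^a_{0,T},\hat\theta^a_{0,T},\pi^a_v)$. Step 8: compute $y\in\arg\min\{\sum_a\sum_v\phi^a_vy^a_v:\sum_a\sum_v v\,y^a_v\le\beta,\ \sum_vy^a_v=1\ \forall a,\ y^a_v\in\{0,1\}\}$. Output $\pi^a_{ABMA}(T)=\pi^a_v$ for the $v$ with $y^a_v=1$. *)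

theory Defs
  imports "HOL-Analysis.Analysis"
begin

text \<open>Vectors: system state x :: real^'x, decision u :: real^'u,
  motivational state theta :: real^'t, incentive ps :: real^'p.\<close>

record ('x, 'u, 't, 'p) agent_model =
  Xset :: "(real^'x) set"
  Uset :: "(real^'u) set"
  Thset :: "(real^'t) set"
  Piset :: "(real^'p) set"
  fobj :: "real^'x \<Rightarrow> real^'u \<Rightarrow> real^'t \<Rightarrow> real^'p \<Rightarrow> real"
  hdyn :: "real^'x \<Rightarrow> real^'u \<Rightarrow> real^'x"
  gdyn :: "real^'x \<Rightarrow> real^'u \<Rightarrow> real^'t \<Rightarrow> real^'p \<Rightarrow> real^'t"
  loss :: "(nat \<Rightarrow> real^'x) \<Rightarrow> (nat \<Rightarrow> real^'u) \<Rightarrow> real"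
    \<comment> \<open>loss on X^n x U^n; the i-th component (i < n) of the arguments is
        the value at time T+1+i\<close>

definition strictly_concave_on :: "'a::real_vector set \<Rightarrow> ('a \<Rightarrow> real) \<Rightarrow> bool" where
  "strictly_concave_on S f \<longleftrightarrow>
     (\<forall>x\<in>S. \<forall>y\<in>S. x \<noteq> y \<longrightarrow> (\<forall>t::real. 0 < t \<and> t < 1 \<longrightarrow>
        (1 - t) * f x + t * f y < f ((1 - t) *\<^sub>R x + t *\<^sub>R y)))"

definition milp_set :: "(real^'d) set \<Rightarrow> bool" where
  "milp_set S \<longleftrightarrow> (\<exists>(m::nat) (k::nat) (A :: nat \<Rightarrow> real^'d) (B :: nat \<Rightarrow> nat \<Rightarrow> real)
      (b :: nat \<Rightarrow> real) (I :: nat set).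
     S = {p. \<exists>z :: nat \<Rightarrow> real. (\<forall>j\<in>I. z j \<in> \<int>) \<and>
             (\<forall>q<m. A q \<bullet> p + (\<Sum>j<k. B q j * z j) \<le> b q)})"

text \<open>Sets of n-tuples (p_0,...,p_{n-1}) (encoded as sequences that vanish from n on)
  described by finitely many mixed integer linear constraints.\<close>

definition milp_block :: "nat \<Rightarrow> (nat \<Rightarrow> real^'d) set \<Rightarrow> bool" where
  "milp_block n S \<longleftrightarrow> (\<exists>(m::nat) (k::nat) (A :: nat \<Rightarrow> nat \<Rightarrow> real^'d) (B :: nat \<Rightarrow> nat \<Rightarrow> real)
      (b :: nat \<Rightarrow> real) (I :: nat set).
     S = {p. (\<forall>i\<ge>n. p i = 0) \<and> (\<exists>z :: nat \<Rightarrow> real. (\<forall>j\<in>I. z j \<in> \<int>) \<and>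
             (\<forall>q<m. (\<Sum>i<n. A q i \<bullet> p i) + (\<Sum>j<k. B q j * z j) \<le> b q))})"

definition milp_loss :: "nat \<Rightarrow> (real^'x) set \<Rightarrow> (real^'u) set \<Rightarrow>
    ((nat \<Rightarrow> real^'x) \<Rightarrow> (nat \<Rightarrow> real^'u) \<Rightarrow> real) \<Rightarrow> bool" where
  "milp_loss n X U l \<longleftrightarrow> (\<exists>(m::nat) (k::nat) (Ax :: nat \<Rightarrow> nat \<Rightarrow> real^'x)
      (Au :: nat \<Rightarrow> nat \<Rightarrow> real^'u) (c :: nat \<Rightarrow> real) (B :: nat \<Rightarrow> nat \<Rightarrow> real)
      (b :: nat \<Rightarrow> real) (I :: nat set).
     \<forall>xs us. (\<forall>i<n. xs i \<in> X \<and> us i \<in> U) \<longrightarrow>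
       (\<forall>r. l xs us = r \<longleftrightarrow>
          (\<exists>z :: nat \<Rightarrow> real. (\<forall>j\<in>I. z j \<in> \<int>) \<and>
             (\<forall>q<m. (\<Sum>i<n. Ax q i \<bullet> xs i + Au q i \<bullet> us i) + c q * r
                     + (\<Sum>j<k. B q j * z j) \<le> b q))))"

definition A1 :: "('x::finite, 'u::finite, 't::finite, 'p::finite) agent_model \<Rightarrow> bool" where
  "A1 M \<longleftrightarrow>
     polyhedron (Xset M) \<and> bounded (Xset M) \<and> convex (Xset M) \<and>
     polyhedron (Uset M) \<and> bounded (Uset M) \<and> convex (Uset M) \<and>
     polyhedron (Thset M) \<and> bounded (Thset M) \<and> convex (Thset M) \<and>
     compact (Piset M) \<and> bounded (Piset M) \<and> milp_set (Piset M)"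

definition A2 :: "('x::finite, 'u::finite, 't::finite, 'p::finite) agent_model \<Rightarrow> bool" where
  "A2 M \<longleftrightarrow>
     (\<forall>u\<in>Uset M. \<forall>th\<in>Thset M. \<forall>p\<in>Piset M. concave_on (Xset M) (\<lambda>x. fobj M x u th p)) \<and>
     (\<forall>x\<in>Xset M. \<forall>th\<in>Thset M. \<forall>p\<in>Piset M. strictly_concave_on (Uset M) (\<lambda>u. fobj M x u th p)) \<and>
     (\<forall>x\<in>Xset M. \<forall>u\<in>Uset M. \<forall>p\<in>Piset M. concave_on (Thset M) (\<lambda>th. fobj M x u th p)) \<and>
     (\<exists>(Qxx :: real^'x^'x) (Qxu :: real^'u^'x) (Qux :: real^'x^'u) (Quu :: real^'u^'u)
        (Htx :: real^'x^'t) (Htu :: real^'u^'t) (Hpx :: real^'x^'p) (Hpu :: real^'u^'p)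
        (K :: nat) (J :: nat \<Rightarrow> nat set)
        (Fx :: nat \<Rightarrow> nat \<Rightarrow> real^'x) (Fu :: nat \<Rightarrow> nat \<Rightarrow> real^'u)
        (Ft :: nat \<Rightarrow> nat \<Rightarrow> real^'t) (Fp :: nat \<Rightarrow> nat \<Rightarrow> real^'p)
        (\<zeta> :: nat \<Rightarrow> nat \<Rightarrow> real).
       \<comment> \<open>Q = [Qxx Qxu; Qux Quu] positive semidefinite\<close>
       (\<forall>x u. 0 \<le> x \<bullet> (Qxx *v x) + x \<bullet> (Qxu *v u) + u \<bullet> (Qux *v x) + u \<bullet> (Quu *v u)) \<and>
       (\<forall>i<K. finite (J i) \<and> J i \<noteq> {}) \<and>
       (\<forall>x u th p. fobj M x u th p =
          - (x \<bullet> (Qxx *v x) + x \<bullet> (Qxu *v u) + u \<bullet> (Qux *v x) + u \<bullet> (Quu *v u))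
          + (th \<bullet> (Htx *v x) + th \<bullet> (Htu *v u) + p \<bullet> (Hpx *v x) + p \<bullet> (Hpu *v u))
          + (\<Sum>i<K. Min ((\<lambda>j. Fx i j \<bullet> x + Fu i j \<bullet> u + Ft i j \<bullet> th + Fp i j \<bullet> p + \<zeta> i j) ` J i))))"

definition A3 :: "('x::finite, 'u::finite, 't::finite, 'p::finite) agent_model \<Rightarrow> bool" where
  "A3 M \<longleftrightarrow>
     (\<exists>(Ah :: real^'x^'x) (Bh :: real^'u^'x) (kh :: real^'x).
        \<forall>x u. hdyn M x u = Ah *v x + Bh *v u + kh) \<and>
     (\<exists>(N :: nat) (P :: nat \<Rightarrow> ((real^'x) \<times> (real^'u) \<times> (real^'t) \<times> (real^'p)) set)
        (Gx :: nat \<Rightarrow> real^'x^'t) (Gu :: nat \<Rightarrow> real^'u^'t) (Gt :: nat \<Rightarrow> real^'t^'t)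
        (Gp :: nat \<Rightarrow> real^'p^'t) (chi :: nat \<Rightarrow> real^'t).
        (\<forall>i<N. polyhedron (P i) \<and> bounded (P i)) \<and>
        (\<forall>i<N. \<forall>j<N. i \<noteq> j \<longrightarrow> interior (P i) \<inter> interior (P j) = {}) \<and>
        Xset M \<times> Uset M \<times> Thset M \<times> Piset M \<subseteq> (\<Union>i<N. P i) \<and>
        (\<forall>i<N. \<forall>x u th p. (x, u, th, p) \<in> P i \<longrightarrow>
           gdyn M x u th p = Gx i *v x + Gu i *v u + Gt i *v th + Gp i *v p + chi i)) \<and>
     \<comment> \<open>surjectivity of h and g onto the state spaces\<close>
     Xset M \<subseteq> (\<lambda>(x, u). hdyn M x u) ` (Xset M \<times> Uset M) \<and>
     Thset M \<subseteq> (\<lambda>(x, u, th, p). gdyn M x u th p) ` (Xset M \<times> Uset M \<times> Thset M \<times> Piset M)"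

definition A8 :: "nat \<Rightarrow> ('x::finite, 'u::finite, 't::finite, 'p::finite) agent_model \<Rightarrow> bool" where
  "A8 n M \<longleftrightarrow>
     (\<exists>B. \<forall>xs us. (\<forall>i<n. xs i \<in> Xset M \<and> us i \<in> Uset M) \<longrightarrow> \<bar>loss M xs us\<bar> \<le> B) \<and>
     milp_loss n (Xset M) (Uset M) (loss M)"

definition feasible_traj ::
  "('x::finite, 'u::finite, 't::finite, 'p::finite) agent_model \<Rightarrow> real^'x \<Rightarrow> real^'t \<Rightarrow> (nat \<Rightarrow> real^'p) \<Rightarrow> nat \<Rightarrow>
   (nat \<Rightarrow> real^'x) \<Rightarrow> (nat \<Rightarrow> real^'u) \<Rightarrow> (nat \<Rightarrow> real^'t) \<Rightarrow> bool" where
  "feasible_traj M x0 th0 ps N x u th \<longleftrightarrow>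
     x 0 = x0 \<and> th 0 = th0 \<and>
     (\<forall>t\<le>N. x t \<in> Xset M \<and> th t \<in> Thset M) \<and>
     (\<forall>t\<le>N. u t \<in> Uset M \<and>
        (\<forall>v\<in>Uset M. fobj M (hdyn M (x t) v) v (th t) (ps t)
                     \<le> fobj M (hdyn M (x t) (u t)) (u t) (th t) (ps t)) \<and>
        x (Suc t) = hdyn M (x t) (u t) \<and>
        th (Suc t) = gdyn M (x t) (u t) (th t) (ps t))"

definition phi ::
  "('x::finite, 'u::finite, 't::finite, 'p::finite) agent_model \<Rightarrow> nat \<Rightarrow> nat \<Rightarrow> real^'x \<Rightarrow> real^'t \<Rightarrow> (nat \<Rightarrow> real^'p) \<Rightarrow> real" where
  "phi M T n x0 th0 ps =
     Inf {loss M (\<lambda>i. if i < n then x (T + 1 + i) else 0) (\<lambda>i. if i < n then u (T + 1 + i) else 0)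
          | x u th. feasible_traj M x0 th0 ps (T + n) x u th}"

text \<open>Full incentive sequence from past incentives (times 0..T) and a future
  block (index i stands for time T+1+i).\<close>

definition combine :: "nat \<Rightarrow> (nat \<Rightarrow> 'v) \<Rightarrow> (nat \<Rightarrow> 'v) \<Rightarrow> nat \<Rightarrow> 'v" where
  "combine T past fut = (\<lambda>t. if t \<le> T then past t else fut (t - Suc T))"

definition Phi ::
  "('ag \<Rightarrow> ('x::finite, 'u::finite, 't::finite, 'p::finite) agent_model) \<Rightarrow> 'ag set \<Rightarrow> nat \<Rightarrow> nat \<Rightarrow>
   ('ag \<Rightarrow> real^'x) \<Rightarrow> ('ag \<Rightarrow> real^'t) \<Rightarrow> ('ag \<Rightarrow> nat \<Rightarrow> real^'p) \<Rightarrow>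
   ('ag \<Rightarrow> nat \<Rightarrow> real^'p) \<Rightarrow> real" where
  "Phi Ms A T n x0 th0 past fut =
     (\<Sum>a\<in>A. phi (Ms a) T n (x0 a) (th0 a) (combine T (past a) (fut a)))"

definition selection_ok ::
  "'ag set \<Rightarrow> (real^'k) set \<Rightarrow> real^'k \<Rightarrow> ('ag \<Rightarrow> real^'k \<Rightarrow> real) \<Rightarrow> bool" where
  "selection_ok A V \<beta> y \<longleftrightarrow>
     (\<forall>a\<in>A. \<forall>v\<in>V. y a v \<in> {0, 1}) \<and>
     (\<forall>a\<in>A. (\<Sum>v\<in>V. y a v) = 1) \<and>
     (\<Sum>a\<in>A. \<Sum>v\<in>V. y a v *\<^sub>R v) \<le> \<beta>"

definition Omega ::
  "'ag set \<Rightarrow> (real^'k) set \<Rightarrow> (real^'k \<Rightarrow> (nat \<Rightarrow> real^'p) set) \<Rightarrow> real^'k \<Rightarrow>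
   ('ag \<Rightarrow> nat \<Rightarrow> real^'p) set" where
  "Omega A V S \<beta> = {fut. \<exists>y. selection_ok A V \<beta> y \<and>
       (\<forall>a\<in>A. \<forall>v\<in>V. y a v = 1 \<longrightarrow> fut a \<in> S v)}"

text \<open>Outputs of algorithm ABMA with Step 2 replaced by
  \<open>(\<hat>x, \<hat>\<theta>) := (x0, theta0)\<close>: any choice of minimizers in Steps 4-5 and Step 8.\<close>

definition ABMA_known_output ::
  "('ag \<Rightarrow> ('x::finite, 'u::finite, 't::finite, 'p::finite) agent_model) \<Rightarrow> 'ag set \<Rightarrow> (real^'k) set \<Rightarrow>
   (real^'k \<Rightarrow> (nat \<Rightarrow> real^'p) set) \<Rightarrow> real^'k \<Rightarrow> nat \<Rightarrow> nat \<Rightarrow>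
   ('ag \<Rightarrow> real^'x) \<Rightarrow> ('ag \<Rightarrow> real^'t) \<Rightarrow> ('ag \<Rightarrow> nat \<Rightarrow> real^'p) \<Rightarrow>
   ('ag \<Rightarrow> nat \<Rightarrow> real^'p) \<Rightarrow> bool" where
  "ABMA_known_output Ms A V S \<beta> T n x0 th0 past out \<longleftrightarrow>
     (\<exists>piv :: 'ag \<Rightarrow> real^'k \<Rightarrow> nat \<Rightarrow> real^'p. \<exists>y.
        \<comment> \<open>Steps 4-5\<close>
        (\<forall>a\<in>A. \<forall>v\<in>V. piv a v \<in> S v \<and>
           (\<forall>p\<in>S v. phi (Ms a) T n (x0 a) (th0 a) (combine T (past a) (piv a v))
                      \<le> phi (Ms a) T n (x0 a) (th0 a) (combine T (past a) p))) \<and>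
        \<comment> \<open>Step 8\<close>
        selection_ok A V \<beta> y \<and>
        (\<forall>y'. selection_ok A V \<beta> y' \<longrightarrow>
           (\<Sum>a\<in>A. \<Sum>v\<in>V. phi (Ms a) T n (x0 a) (th0 a) (combine T (past a) (piv a v)) * y a v)
           \<le> (\<Sum>a\<in>A. \<Sum>v\<in>V. phi (Ms a) T n (x0 a) (th0 a) (combine T (past a) (piv a v)) * y' a v)) \<and>
        \<comment> \<open>output\<close>
        (\<forall>a\<in>A. \<forall>v\<in>V. y a v = 1 \<longrightarrow> out a = piv a v))"

end

theory Submission
  imports Defs
begin

lemma sel_unique:
  fixes y :: "'v \<Rightarrow> real"
  assumes "finite V" "\<forall>v\<in>V. y v \<in> {0,1}" "(\<Sum>v\<in>V. y v) = 1"
  shows "\<exists>v0\<in>V. y v0 = 1 \<and> (\<forall>v\<in>V. v \<noteq> v0 \<longrightarrow> y v = 0)"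
proof -
  have "\<exists>v0\<in>V. y v0 \<noteq> 0"
  proof (rule ccontr)
    assume "\<not> ?thesis"
    then have "(\<Sum>v\<in>V. y v) = 0" by simp
    with assms(3) show False by simp
  qed
  then obtain v0 where v0: "v0 \<in> V" "y v0 \<noteq> 0" by blast
  then have y1: "y v0 = 1" using assms(2) by auto
  have "(\<Sum>v\<in>V. y v) = y v0 + (\<Sum>v\<in>V - {v0}. y v)"
    using assms(1) v0(1) by (simp add: sum.remove)
  then have s0: "(\<Sum>v\<in>V - {v0}. y v) = 0" using assms(3) y1 by simp
  have nn: "\<forall>v\<in>V - {v0}. 0 \<le> y v" using assms(2) by auto
  have "\<forall>v\<in>V - {v0}. y v = 0"
    using sum_nonneg_eq_0_iff[of "V - {v0}" y] assms(1) nn s0 by auto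
  then show ?thesis using v0 y1 by blast
qed

lemma sel_sum:
  fixes y :: "'v \<Rightarrow> real"
  assumes "finite V" "v0 \<in> V" "\<forall>v\<in>V. v \<noteq> v0 \<longrightarrow> y v = 0" "y v0 = 1"
  shows "(\<Sum>v\<in>V. g v * y v) = g v0"
proof -
  have "(\<Sum>v\<in>V. g v * y v) = g v0 * y v0 + (\<Sum>v\<in>V - {v0}. g v * y v)"
    using assms(1,2) by (simp add: sum.remove)
  also have "(\<Sum>v\<in>V - {v0}. g v * y v) = 0" using assms(3) by simp
  finally show ?thesis using assms(4) by simp
qed

theorem corollary5:
  fixes Ms :: "'ag \<Rightarrow> ('x::finite, 'u::finite, 't::finite, 'p::finite) agent_model"
    and A :: "'ag set"
    and V :: "(real^'k::finite) set"
    and S :: "real^'k \<Rightarrow> (nat \<Rightarrow> real^'p) set"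
    and \<beta> :: "real^'k"
    and T n :: nat
    and x0 :: "'ag \<Rightarrow> real^'x" and th0 :: "'ag \<Rightarrow> real^'t"
    and past :: "'ag \<Rightarrow> nat \<Rightarrow> real^'p"
    and out :: "'ag \<Rightarrow> nat \<Rightarrow> real^'p"
  assumes fin_A: "finite A"
    and agents: "\<forall>a\<in>A. A1 (Ms a) \<and> A2 (Ms a) \<and> A3 (Ms a) \<and> A8 n (Ms a)"
    and fin_V: "finite V"
    and S_sub: "\<forall>v\<in>V. \<forall>a\<in>A. \<forall>p\<in>S v. (\<forall>i<n. p i \<in> Piset (Ms a)) \<and> (\<forall>i\<ge>n. p i = 0)"
    and S_compact: "\<forall>v\<in>V. compact (S v)"
    and S_milp: "\<forall>v\<in>V. milp_block n (S v)"
    and init: "\<forall>a\<in>A. x0 a \<in> Xset (Ms a) \<and> th0 a \<in> Thset (Ms a)"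
    and past_in: "\<forall>a\<in>A. \<forall>t\<le>T. past a t \<in> Piset (Ms a)"
    and alg: "ABMA_known_output Ms A V S \<beta> T n x0 th0 past out"
  shows "out \<in> Omega A V S \<beta> \<and>
         (\<forall>fut\<in>Omega A V S \<beta>. Phi Ms A T n x0 th0 past out \<le> Phi Ms A T n x0 th0 past fut)"
proof -
  define P where "P a p = phi (Ms a) T n (x0 a) (th0 a) (combine T (past a) p)" for a p
  obtain piv y where
    piv: "\<forall>a\<in>A. \<forall>v\<in>V. piv a v \<in> S v \<and> (\<forall>p\<in>S v. P a (piv a v) \<le> P a p)" and
    ysel: "selection_ok A V \<beta> y" and
    yopt: "\<forall>y'. selection_ok A V \<beta> y' \<longrightarrow>
           (\<Sum>a\<in>A. \<Sum>v\<in>V. P a (piv a v) * y a v) \<le> (\<Sum>a\<in>A. \<Sum>v\<in>V. P a (piv a v) * y' a v)" and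
    yout: "\<forall>a\<in>A. \<forall>v\<in>V. y a v = 1 \<longrightarrow> out a = piv a v"
    using alg unfolding ABMA_known_output_def P_def by blast
  have uniq: "\<exists>v0\<in>V. y' a v0 = 1 \<and> (\<forall>v\<in>V. v \<noteq> v0 \<longrightarrow> y' a v = 0)"
    if "selection_ok A V \<beta> y'" "a \<in> A" for y' a
    using sel_unique[OF fin_V, of "y' a"] that unfolding selection_ok_def by blast
  have outOm: "out \<in> Omega A V S \<beta>"
    unfolding Omega_def
  proof (intro CollectI exI conjI ballI impI)
    show "selection_ok A V \<beta> y" by (rule ysel)
    fix a v assume "a \<in> A" "v \<in> V" "y a v = 1"
    then show "out a \<in> S v" using yout piv by metis
  qed
  have eqout: "(\<Sum>v\<in>V. P a (piv a v) * y a v) = P a (out a)" if aA: "a \<in> A" for a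
  proof -
    obtain v0 where v0: "v0 \<in> V" "y a v0 = 1" "\<forall>v\<in>V. v \<noteq> v0 \<longrightarrow> y a v = 0"
      using uniq[OF ysel aA] by blast
    have "(\<Sum>v\<in>V. P a (piv a v) * y a v) = P a (piv a v0)"
      using sel_sum[OF fin_V v0(1) v0(3) v0(2)] .
    also have "\<dots> = P a (out a)" using yout aA v0 by simp
    finally show ?thesis .
  qed
  have "Phi Ms A T n x0 th0 past out \<le> Phi Ms A T n x0 th0 past fut"
    if fOm: "fut \<in> Omega A V S \<beta>" for fut
  proof -
    obtain y' where y': "selection_ok A V \<beta> y'" "\<forall>a\<in>A. \<forall>v\<in>V. y' a v = 1 \<longrightarrow> fut a \<in> S v"
      using fOm unfolding Omega_def by blast
    have le: "(\<Sum>v\<in>V. P a (piv a v) * y' a v) \<le> P a (fut a)" if aA: "a \<in> A" for a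
    proof -
      obtain v0 where v0: "v0 \<in> V" "y' a v0 = 1" "\<forall>v\<in>V. v \<noteq> v0 \<longrightarrow> y' a v = 0"
        using uniq[OF y'(1) aA] by blast
      have "(\<Sum>v\<in>V. P a (piv a v) * y' a v) = P a (piv a v0)"
        using sel_sum[OF fin_V v0(1) v0(3) v0(2)] .
      also have "\<dots> \<le> P a (fut a)" using piv y'(2) aA v0 by blast
      finally show ?thesis .
    qed
    have "Phi Ms A T n x0 th0 past out = (\<Sum>a\<in>A. P a (out a))"
      unfolding Phi_def P_def by simp
    also have "\<dots> = (\<Sum>a\<in>A. \<Sum>v\<in>V. P a (piv a v) * y a v)"
      using eqout by simp
    also have "\<dots> \<le> (\<Sum>a\<in>A. \<Sum>v\<in>V. P a (piv a v) * y' a v)"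
      using yopt y'(1) by blast
    also have "\<dots> \<le> (\<Sum>a\<in>A. P a (fut a))"
      using le by (rule sum_mono)
    also have "\<dots> = Phi Ms A T n x0 th0 past fut"
      unfolding Phi_def P_def by simp
    finally show ?thesis .
  qed
  then show ?thesis using outOm by blast
qed

end
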